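(* Let $3\le d\le 50$, let $(\alpha,\beta)\in\mathcal{A}_d$, let $\ell>1000$ be a prime, and let $(y_1,y_2)$ be integers satisfying \[ 4\beta y_2^\ell-\alpha^2 y_1^{2\ell}=d^2-1 . \] Suppose $|y_1|\ge 2$, $y_2\ge 2$ and $y_2\ne y_1^2$. Let $\alpha_1=4\beta/\alpha^2$ and $\alpha_2=y_1^2/y_2$. Then $\alpha_1$ and $\alpha_2$ are positive and multiplicatively independent. Moreover, writing $\Lambda=\log\alpha_1-\ell\log\alpha_2$, we have \[ 0<\Lambda<\frac{d^2-1}{\alpha^2 y_1^{2\ell}} . \]
   Context: For a prime $q$ let $\mu_q=\operatorname{ord}_q(d^2-1)$ and $\nu_q=\operatorname{ord}_q(d)$. To each prime $q$ associate a finite set $T_q\subset\mathbb{Z}^2$: if $q\nmid d(d^2-1)$, $T_q=\{(0,0)\}$. For $q=2$: $T_2=\{(0,1-\nu_2)\}$ if $2\mid d$; $T_2=\{(1,0),(\mu_2/2,1-\mu_2/2),(3-\mu_2,\mu_2-2)\}$ if $2\nmid d$ and $\mu_2$ is even; $T_2=\{(1,0),(3-\mu_2,\mu_2-2)\}$ if $2\nmid d$ and $\mu_2$ is odd. For odd $q\mid d$: $T_q=\{(-\nu_q,0),(0,-\nu_q)\}$. For odd $q\mid d^2-1$: $T_q=\{(0,0),(-\mu_q,\mu_q),(\mu_q/2,-\mu_q/2)\}$ if $\mu_q$ is even, and $T_q=\{(0,0),(-\mu_q,\mu_q)\}$ if $\mu_q$ is odd. Then $\mathcal{A}_d$ is the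 set of pairs of positive rationals $(\alpha,\beta)$ with $(\operatorname{ord}_q(\alpha),\operatorname{ord}_q(\beta))\in T_q$ for every prime $q$. *)

theory Defs
  imports "HOL-Computational_Algebra.Computational_Algebra"
begin

definition ordz :: "nat \<Rightarrow> int \<Rightarrow> int" where
  "ordz q n = int (multiplicity (int q) n)"

definition ordq :: "nat \<Rightarrow> rat \<Rightarrow> int" where
  "ordq q r = (case quotient_of r of (a, b) \<Rightarrow> ordz q a - ordz q b)"

definition Tset :: "int \<Rightarrow> nat \<Rightarrow> (int \<times> int) set" where
  "Tset d q =
    (let mu = ordz q (d^2 - 1); nu = ordz q d in
     if \<not> (int q dvd d * (d^2 - 1)) then {(0, 0)}
     else if q = 2 then
       (if 2 dvd d then {(0, 1 - nu)}
        else if even mu then {(1, 0), (mu div 2, 1 - mu div 2), (3 - mu, mu - 2)}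
        else {(1, 0), (3 - mu, mu - 2)})
     else if int q dvd d then {(-nu, 0), (0, -nu)}
     else if even mu then {(0, 0), (-mu, mu), (mu div 2, -(mu div 2))}
     else {(0, 0), (-mu, mu)})"

definition Aset :: "int \<Rightarrow> (rat \<times> rat) set" where
  "Aset d = {(a, b). a > 0 \<and> b > 0 \<and>
     (\<forall>q. prime q \<longrightarrow> (ordq q a, ordq q b) \<in> Tset d q)}"

definition mult_indep :: "rat \<Rightarrow> rat \<Rightarrow> bool" where
  "mult_indep x y \<longleftrightarrow> (\<forall>m n :: int. x powi m * y powi n = 1 \<longrightarrow> m = 0 \<and> n = 0)"

end

theory Submission
  imports Defs
begin

lemma ordq_frac:
  assumes "prime q" "a \<noteq> 0" "b \<noteq> 0"
  shows "ordq q (of_int a / of_int b) = ordz q a - ordz q b"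
proof -
  obtain a' b' where qo: "quotient_of (of_int a / of_int b) = (a', b')" by (cases "quotient_of (of_int a / of_int b)") auto
  have b'pos: "b' > 0" using quotient_of_denom_pos[OF qo] .
  have eq: "(of_int a / of_int b :: rat) = of_int a' / of_int b'" using quotient_of_div[OF qo] .
  hence "of_int a * of_int b' = (of_int a' * of_int b :: rat)"
    using assms b'pos by (simp add: frac_eq_eq)
  hence e2: "a * b' = a' * b" by (metis of_int_eq_iff of_int_mult)
  have a'nz: "a' \<noteq> 0" using e2 assms b'pos by auto
  have pe: "prime_elem (int q)" using assms(1) by simp
  have "multiplicity (int q) (a * b') = multiplicity (int q) (a' * b)" using e2 by simp
  hence "multiplicity (int q) a + multiplicity (int q) b' = multiplicity (int q) a' + multiplicity (int q) b"
    using pe assms b'pos a'nz by (simp add: prime_elem_multiplicity_mult_distrib)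
  thus ?thesis unfolding ordq_def ordz_def qo by simp
qed

lemma ordq_int: "prime q \<Longrightarrow> a \<noteq> 0 \<Longrightarrow> ordq q (of_int a) = ordz q a"
  using ordq_frac[of q a 1] by (simp add: ordz_def)

lemma rat_frac_ex: "\<exists>a b. a \<noteq> 0 \<and> b \<noteq> 0 \<and> r = (of_int a / of_int b :: rat)" if "r \<noteq> 0"
proof -
  obtain a b where qo: "quotient_of r = (a, b)" by (cases "quotient_of r") auto
  have "b > 0" using quotient_of_denom_pos[OF qo] .
  moreover have "r = of_int a / of_int b" using quotient_of_div[OF qo] .
  ultimately show ?thesis using that by (intro exI[of _ a] exI[of _ b]) auto
qed

lemma ordq_mult:
  assumes "prime q" "r \<noteq> 0" "s \<noteq> 0"
  shows "ordq q (r * s) = ordq q r + ordq q s"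
proof -
  obtain a b where ab: "a \<noteq> 0" "b \<noteq> 0" "r = of_int a / of_int b" using rat_frac_ex[OF assms(2)] by blast
  obtain c e where ce: "c \<noteq> 0" "e \<noteq> 0" "s = of_int c / of_int e" using rat_frac_ex[OF assms(3)] by blast
  have "r * s = of_int (a*c) / of_int (b*e)" using ab ce by simp
  hence "ordq q (r * s) = ordz q (a*c) - ordz q (b*e)" using ordq_frac[of q "a*c" "b*e"] assms ab ce by simp
  also have "\<dots> = (ordz q a - ordz q b) + (ordz q c - ordz q e)"
    using ab ce assms(1) by (simp add: ordz_def prime_elem_multiplicity_mult_distrib)
  finally show ?thesis using ordq_frac assms ab ce by simp
qed

lemma ordq_inverse:
  assumes "prime q" "r \<noteq> 0"
  shows "ordq q (inverse r) = - ordq q r"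
proof -
  obtain a b where ab: "a \<noteq> 0" "b \<noteq> 0" "r = of_int a / of_int b" using rat_frac_ex[OF assms(2)] by blast
  have "inverse r = of_int b / of_int a" using ab by simp
  thus ?thesis using ordq_frac assms ab by simp
qed

lemma ordq_one: "prime q \<Longrightarrow> ordq q 1 = 0"
  using ordq_int[of q 1] by (simp add: ordz_def)

lemma ordq_power:
  assumes "prime q" "r \<noteq> 0"
  shows "ordq q (r ^ k) = int k * ordq q r"
  by (induction k) (simp_all add: ordq_one assms ordq_mult algebra_simps)

lemma ordq_powi:
  assumes "prime q" "r \<noteq> 0"
  shows "ordq q (r powi k) = k * ordq q r"
  using assms by (auto simp: power_int_def ordq_power ordq_inverse)


lemma ordz_bound:
  assumes "prime q" "n \<noteq> 0" "\<bar>n\<bar> < 2 ^ k"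
  shows "ordz q n < int k"
proof -
  let ?m = "multiplicity (int q) n"
  have "int q ^ ?m dvd n" by (rule multiplicity_dvd)
  hence "\<bar>int q ^ ?m\<bar> \<le> \<bar>n\<bar>" using assms(2) dvd_imp_le_int by blast
  hence "int q ^ ?m \<le> \<bar>n\<bar>" by simp
  moreover have "(2::int) ^ ?m \<le> int q ^ ?m"
    using assms(1) prime_ge_2_nat by (intro power_mono) auto
  ultimately have "(2::int) ^ ?m < 2 ^ k" using assms(3) by linarith
  hence "?m < k" by simp
  thus ?thesis unfolding ordz_def by simp
qed

lemma Tset_bounds_aux:
  fixes mu nu :: int
  assumes "(s,t) \<in> (if \<not> c1 then {(0, 0)}
     else if c2 then
       (if c3 then {(0, 1 - nu)}
        else if even mu then {(1, 0), (mu div 2, 1 - mu div 2), (3 - mu, mu - 2)}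
        else {(1, 0), (3 - mu, mu - 2)})
     else if c4 then {(-nu, 0), (0, -nu)}
     else if even mu then {(0, 0), (-mu, mu), (mu div 2, -(mu div 2))}
     else {(0, 0), (-mu, mu)})" "0 \<le> mu" "mu \<le> 11" "0 \<le> nu" "nu \<le> 11"
  shows "\<bar>s\<bar> \<le> 11 \<and> \<bar>t\<bar> \<le> 11 \<and> s \<ge> -(nu + mu)"
proof -
  have h: "0 \<le> mu div 2" "mu div 2 \<le> 5" using assms(2,3) by auto
  show ?thesis using assms(1) assms(2-5) h
    by (simp split: if_splits; elim disjE; auto simp: abs_le_iff)
qed

lemma Tset_bounds:
  assumes "(s,t) \<in> Tset d q" "ordz q (d^2-1) \<le> 11" "ordz q d \<le> 11"
  shows "\<bar>s\<bar> \<le> 11 \<and> \<bar>t\<bar> \<le> 11 \<and> s \<ge> -(ordz q d + ordz q (d^2-1))"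
proof -
  have n1: "ordz q (d^2-1) \<ge> 0" "ordz q d \<ge> 0" by (simp_all add: ordz_def)
  from assms(1) have "(s,t) \<in> (let mu = ordz q (d^2 - 1); nu = ordz q d in
     if \<not> (int q dvd d * (d^2 - 1)) then {(0, 0)}
     else if q = 2 then
       (if 2 dvd d then {(0, 1 - nu)}
        else if even mu then {(1, 0), (mu div 2, 1 - mu div 2), (3 - mu, mu - 2)}
        else {(1, 0), (3 - mu, mu - 2)})
     else if int q dvd d then {(-nu, 0), (0, -nu)}
     else if even mu then {(0, 0), (-mu, mu), (mu div 2, -(mu div 2))}
     else {(0, 0), (-mu, mu)})" unfolding Tset_def .
  hence "(s,t) \<in> (
     if \<not> (int q dvd d * (d^2 - 1)) then {(0, 0)}
     else if q = 2 then
       (if 2 dvd d then {(0, 1 - ordz q d)}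
        else if even (ordz q (d^2 - 1)) then {(1, 0), (ordz q (d^2 - 1) div 2, 1 - ordz q (d^2 - 1) div 2), (3 - ordz q (d^2 - 1), ordz q (d^2 - 1) - 2)}
        else {(1, 0), (3 - ordz q (d^2 - 1), ordz q (d^2 - 1) - 2)})
     else if int q dvd d then {(-ordz q d, 0), (0, -ordz q d)}
     else if even (ordz q (d^2 - 1)) then {(0, 0), (-ordz q (d^2 - 1), ordz q (d^2 - 1)), (ordz q (d^2 - 1) div 2, -(ordz q (d^2 - 1) div 2))}
     else {(0, 0), (-ordz q (d^2 - 1), ordz q (d^2 - 1))})" unfolding Let_def .
  from Tset_bounds_aux[OF this n1(1) assms(2) n1(2) assms(3)] show ?thesis .
qed

lemma alpha_lower:
  fixes \<alpha> :: rat and M :: int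
  assumes "\<alpha> > 0" "M > 0" "\<And>q. prime q \<Longrightarrow> ordq q \<alpha> \<ge> - ordz q M"
  shows "\<alpha> \<ge> 1 / of_int M"
proof -
  obtain a b where qo: "quotient_of \<alpha> = (a, b)" by (cases "quotient_of \<alpha>") auto
  have bpos: "b > 0" using quotient_of_denom_pos[OF qo] .
  have al: "\<alpha> = of_int a / of_int b" using quotient_of_div[OF qo] .
  have cop: "coprime a b" using quotient_of_coprime[OF qo] .
  have apos: "a > 0" using assms(1) bpos al by (simp add: zero_less_divide_iff)
  have "b dvd M"
  proof (rule multiplicity_le_imp_dvd)
    show "b \<noteq> 0" using bpos by simp
    fix p :: int assume pp: "prime p"
    show "multiplicity p b \<le> multiplicity p M"
    proof (cases "p dvd b")
      case True
      have "\<not> p dvd a" using True cop pp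
        using coprime_common_divisor not_prime_unit by blast
      hence "multiplicity p a = 0" by (rule not_dvd_imp_multiplicity_0)
      have p0: "p > 0" using pp prime_gt_0_int by blast
      have ip: "int (nat p) = p" using p0 by simp
      have pn: "prime (nat p)" using pp ip prime_int_nat_transfer by metis
      have "ordq (nat p) \<alpha> \<ge> - ordz (nat p) M" using assms(3)[OF pn] .
      thus ?thesis using \<open>multiplicity p a = 0\<close> unfolding ordq_def ordz_def qo ip by simp
    next
      case False
      thus ?thesis by (simp add: not_dvd_imp_multiplicity_0)
    qed
  qed
  hence "b \<le> M" using assms(2) by (simp add: zdvd_imp_le)
  have "1 / of_int M \<le> (1 / of_int b :: rat)" using \<open>b \<le> M\<close> bpos
    by (intro frac_le) auto
  also have "\<dots> \<le> of_int a / of_int b" using apos bpos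
    by (intro divide_right_mono) auto
  finally show ?thesis using al by simp
qed


lemma of_rat_powi: "(of_rat (r powi n) :: real) = of_rat r powi n"
  by (simp add: power_int_def of_rat_power of_rat_inverse)

lemma ln_powi: "(x::real) > 0 \<Longrightarrow> ln (x powi n) = real_of_int n * ln x"
  by (simp add: powr_real_of_int'[symmetric] ln_powr)

lemma xsmall_aux:
  fixes a Y D :: real
  assumes "a \<ge> 1/124950" "Y \<ge> 4" "D \<le> 2499" "l > 1000"
  shows "2 * D * Y < a^2 * Y^l"
proof -
  have l1: "l = Suc (l - 1)" using assms(4) by simp
  have "Y^l = Y * Y^(l-1)" by (subst l1) simp
  have "(4::real)^1000 \<le> 4^(l-1)" using assms(4) by (intro power_increasing) auto
  also have "\<dots> \<le> Y^(l-1)" using assms(2) by (intro power_mono) auto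
  finally have p1: "(4::real)^1000 \<le> Y^(l-1)" .
  have a0: "a \<ge> 0" using assms(1) by (smt (verit) divide_nonneg_nonneg)
  have "(1/124950::real)^2 \<le> a^2" using assms(1) by (intro power_mono) auto
  hence "(1/124950::real)^2 * 4^1000 \<le> a^2 * Y^(l-1)" using p1
    by (intro mult_mono) auto
  moreover have "2 * D < (1/124950::real)^2 * 4^1000"
  proof -
    have "(2*2499::real) * 124950^2 < 4^1000" by simp
    hence "(2*2499::real) < 4^1000 / 124950^2" by (simp add: field_simps)
    thus ?thesis using assms(3) by (simp add: power_divide)
  qed
  ultimately have "2 * D < a^2 * Y^(l-1)" by linarith
  hence "2 * D * Y < a^2 * Y^(l-1) * Y" using assms(2) by (intro mult_strict_right_mono) auto
  thus ?thesis using \<open>Y^l = Y * Y^(l-1)\<close> by (simp add: algebra_simps)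
qed

lemma L2big:
  fixes Y Z :: int
  assumes "Y \<ge> 1" "Z \<ge> 1" "Z \<noteq> Y"
  shows "\<bar>ln (real_of_int Y / real_of_int Z)\<bar> \<ge> 1 / (2 * real_of_int Y)"
proof (cases "Z > Y")
  case True
  hence Z1: "real_of_int Z \<ge> real_of_int Y + 1" by linarith
  have "ln (real_of_int Y / real_of_int Z) \<le> ln (real_of_int Y / (real_of_int Y + 1))"
    using assms Z1 by (subst ln_le_cancel_iff) (auto intro!: divide_left_mono)
  also have "\<dots> \<le> real_of_int Y / (real_of_int Y + 1) - 1"
    using assms by (intro ln_le_minus_one) auto
  also have "\<dots> = - 1 / (real_of_int Y + 1)" using assms by (simp add: field_simps)
  finally have "ln (real_of_int Y / real_of_int Z) \<le> - 1 / (real_of_int Y + 1)" .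
  moreover have "1 / (2 * real_of_int Y) \<le> 1 / (real_of_int Y + 1)"
    using assms by (intro divide_left_mono) auto
  ultimately show ?thesis by linarith
next
  case False
  hence Z1: "real_of_int Z \<le> real_of_int Y - 1" using assms by linarith
  have "ln (real_of_int Z / real_of_int Y) \<le> real_of_int Z / real_of_int Y - 1"
    using assms by (intro ln_le_minus_one) auto
  also have "\<dots> \<le> - 1 / real_of_int Y"
  proof -
    have "real_of_int Y * (1 + real_of_int Z) \<le> real_of_int Y * real_of_int Y"
      using assms Z1 by (intro mult_left_mono) auto
    thus ?thesis using assms by (simp add: field_simps distrib_left)
  qed
  finally have h: "ln (real_of_int Z / real_of_int Y) \<le> - 1 / real_of_int Y" .
  have "ln (real_of_int Y / real_of_int Z) = - ln (real_of_int Z / real_of_int Y)"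
    using assms by (simp add: ln_div)
  moreover have "1 / (2 * real_of_int Y) \<le> 1 / real_of_int Y"
    using assms by (intro divide_left_mono) auto
  ultimately show ?thesis using h by linarith
qed


theorem lemma5p2:
  fixes d :: int and \<alpha> \<beta> :: rat and l :: nat and y1 y2 :: int
  assumes "3 \<le> d" and "d \<le> 50"
    and "(\<alpha>, \<beta>) \<in> Aset d"
    and "prime l" and "l > 1000"
    and "4 * \<beta> * of_int y2 ^ l - \<alpha>^2 * of_int y1 ^ (2 * l) = of_int (d^2 - 1)"
    and "\<bar>y1\<bar> \<ge> 2" and "y2 \<ge> 2" and "y2 \<noteq> y1^2"
  shows "4 * \<beta> / \<alpha>^2 > 0 \<and> of_int y1 ^ 2 / of_int y2 > (0::rat)
    \<and> mult_indep (4 * \<beta> / \<alpha>^2) (of_int y1 ^ 2 / of_int y2)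
    \<and> 0 < ln (real_of_rat (4 * \<beta> / \<alpha>^2)) - real l * ln (real_of_rat (of_int y1 ^ 2 / of_int y2))
    \<and> ln (real_of_rat (4 * \<beta> / \<alpha>^2)) - real l * ln (real_of_rat (of_int y1 ^ 2 / of_int y2))
        < real_of_int (d^2 - 1) / (real_of_rat \<alpha>^2 * real_of_int y1 ^ (2 * l))"
proof -
  have apos: "\<alpha> > 0" and bpos: "\<beta> > 0"
    and T: "\<And>q. prime q \<Longrightarrow> (ordq q \<alpha>, ordq q \<beta>) \<in> Tset d q"
    using assms(3) unfolding Aset_def by auto
  have dsq: "d^2 \<ge> 9" "d^2 \<le> 2500"
    using power_mono[of 3 d 2] power_mono[of d 50 2] assms(1,2) by auto
  have mub: "ordz q (d^2-1) \<le> 11" if "prime q" for q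
    using ordz_bound[of q "d^2-1" 12] that dsq by (simp add: abs_less_iff)
  have nub: "ordz q d \<le> 11" if "prime q" for q
    using ordz_bound[of q d 12] that assms(1,2) by (simp add: abs_less_iff)
  have b4: "ordz q 4 \<le> 2" if "prime q" for q
    using ordz_bound[of q 4 3] that by simp
  have Tb: "\<bar>ordq q \<alpha>\<bar> \<le> 11 \<and> \<bar>ordq q \<beta>\<bar> \<le> 11 \<and> ordq q \<alpha> \<ge> -(ordz q d + ordz q (d^2-1))"
    if "prime q" for q using Tset_bounds[OF T[OF that] mub[OF that] nub[OF that]] .
  define M where "M = d * (d^2 - 1)"
  have Mpos: "M > 0" unfolding M_def using dsq assms(1) by simp
  have Mle: "M \<le> 124950" unfolding M_def
    using mult_mono[of d 50 "d^2-1" 2499] dsq assms(1,2) by simp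
  have ordM: "ordz q M = ordz q d + ordz q (d^2-1)" if "prime q" for q
    unfolding M_def ordz_def using that dsq assms(1)
    by (simp add: prime_elem_multiplicity_mult_distrib)
  have alow: "\<alpha> \<ge> 1 / of_int M"
    by (rule alpha_lower[OF apos Mpos]) (use Tb ordM in auto)
  define \<alpha>1 where "\<alpha>1 = 4 * \<beta> / \<alpha>^2"
  define \<alpha>2 where "\<alpha>2 = (of_int y1 ^ 2 / of_int y2 :: rat)"
  have y1nz: "y1 \<noteq> 0" using assms(7) by auto
  have a1pos: "\<alpha>1 > 0" unfolding \<alpha>1_def using apos bpos by simp
  have a2pos: "\<alpha>2 > 0" unfolding \<alpha>2_def using assms(8) y1nz by simp
  have v1: "ordq q \<alpha>1 = ordz q 4 + ordq q \<beta> - 2 * ordq q \<alpha>" if "prime q" for q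
  proof -
    have "\<alpha>1 = of_int 4 * \<beta> * inverse \<alpha> ^ 2" unfolding \<alpha>1_def by (simp add: field_simps)
    hence "ordq q \<alpha>1 = ordq q (of_int 4) + ordq q \<beta> + ordq q (inverse \<alpha> ^ 2)"
      using that apos bpos by (simp add: ordq_mult del: of_int_numeral)
    thus ?thesis using that apos by (simp add: ordq_power ordq_inverse ordq_int del: of_int_numeral)
  qed
  have v1b: "\<bar>ordq q \<alpha>1\<bar> \<le> 35" if "prime q" for q
  proof -
    have "ordz q 4 \<ge> 0" by (simp add: ordz_def)
    thus ?thesis using v1[OF that] b4[OF that] Tb[OF that] unfolding abs_le_iff by linarith
  qed
  have v2: "ordq q \<alpha>2 = ordz q (y1^2) - ordz q y2" if "prime q" for q
    unfolding \<alpha>2_def using ordq_frac[OF that, of "y1^2" y2] y1nz assms(8) by simp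
  have exq: "\<exists>q. prime q \<and> ordq q \<alpha>2 \<noteq> 0"
  proof (rule ccontr)
    assume "\<not> ?thesis"
    hence h: "ordz q (y1^2) = ordz q y2" if "prime q" for q using v2 that by force
    have "normalize (y1^2) = normalize y2"
    proof (rule multiplicity_eq_imp_eq)
      show "y1^2 \<noteq> 0" using y1nz by simp
      show "y2 \<noteq> 0" using assms(8) by simp
      fix p :: int assume pp: "prime p"
      have p0: "p > 0" using pp prime_gt_0_int by blast
      have ip: "int (nat p) = p" using p0 by simp
      have pn: "prime (nat p)" using pp ip prime_int_nat_transfer by metis
      show "multiplicity p (y1^2) = multiplicity p y2" using h[OF pn] unfolding ordz_def ip by simp
    qed
    hence "y1^2 = y2" using assms(8) by simp
    thus False using assms(9) by simp
  qed
  define a where "a = real_of_rat \<alpha>"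
  define b where "b = real_of_rat \<beta>"
  define Y where "Y = real_of_int (y1^2)"
  define Z where "Z = real_of_int y2"
  define P where "P = a^2 * real_of_int y1 ^ (2*l)"
  define DD where "DD = real_of_int (d^2 - 1)"
  define x where "x = DD / P"
  have a0: "a > 0" unfolding a_def using apos by simp
  have b0: "b > 0" unfolding b_def using bpos by simp
  have Y4: "Y \<ge> 4"
  proof -
    have "(2::int)^2 \<le> \<bar>y1\<bar>^2" using assms(7) by (intro power_mono) auto
    hence "4 \<le> y1^2" by simp
    hence "real_of_int 4 \<le> real_of_int (y1^2)" by (simp only: of_int_le_iff)
    thus ?thesis unfolding Y_def by simp
  qed
  have Z2: "Z \<ge> 2" unfolding Z_def using assms(8) by simp
  have YP: "real_of_int y1 ^ (2*l) = Y^l" unfolding Y_def by (simp add: power_mult)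
  have P0: "P > 0" unfolding P_def YP using a0 Y4 by simp
  have DD8: "DD \<ge> 8" "DD \<le> 2499"
  proof -
    have "8 \<le> d^2-1" "d^2-1 \<le> 2499" using dsq by linarith+
    hence "real_of_int 8 \<le> DD" "DD \<le> real_of_int 2499" unfolding DD_def by (simp only: of_int_le_iff)+
    thus "DD \<ge> 8" "DD \<le> 2499" by simp_all
  qed
  have x0: "x > 0" unfolding x_def using P0 DD8 by simp
  have r1: "real_of_rat \<alpha>1 = 4 * b / a^2" unfolding \<alpha>1_def a_def b_def
    by (simp add: of_rat_divide of_rat_mult of_rat_power)
  have r2: "real_of_rat \<alpha>2 = Y / Z" unfolding \<alpha>2_def Y_def Z_def
    by (simp add: of_rat_divide of_rat_power)
  have eqR: "4 * b * Z^l - P = DD"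
  proof -
    have "real_of_rat (4 * \<beta> * of_int y2 ^ l - \<alpha>^2 * of_int y1 ^ (2 * l)) = real_of_rat (of_int (d^2 - 1))"
      using assms(6) by simp
    thus ?thesis unfolding P_def DD_def a_def b_def Z_def
      by (simp add: of_rat_diff of_rat_mult of_rat_power)
  qed
  have ratio: "(4 * b / a^2) / (Y / Z)^l = 1 + x"
  proof -
    have "(4 * b / a^2) / (Y / Z)^l = (4 * b * Z^l) / P"
      unfolding P_def YP using a0 Z2 Y4 by (simp add: field_simps power_divide)
    also have "\<dots> = (P + DD) / P" using eqR by simp
    also have "\<dots> = 1 + x" unfolding x_def using P0 by (simp add: field_simps)
    finally show ?thesis .
  qed
  define \<Lambda> where "\<Lambda> = ln (4 * b / a^2) - real l * ln (Y / Z)"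
  have Lx: "\<Lambda> = ln (1 + x)"
  proof -
    have "\<Lambda> = ln (4 * b / a^2) - ln ((Y / Z)^l)"
      unfolding \<Lambda>_def using Y4 Z2 by (simp add: ln_realpow)
    also have "\<dots> = ln ((4 * b / a^2) / (Y / Z)^l)"
      using a0 b0 Y4 Z2 by (subst ln_div) auto
    finally show ?thesis using ratio by simp
  qed
  have Lpos: "\<Lambda> > 0" using Lx x0 by simp
  have Lless: "\<Lambda> < x" using Lx x0 ln_add_one_self_less_self by simp
  have aM: "a \<ge> 1/124950"
  proof -
    have "(1/124950::real) \<le> 1 / real_of_int M" using Mpos Mle by (intro divide_left_mono) auto
    also have "\<dots> = real_of_rat (1 / of_int M)" by (simp add: of_rat_divide)
    also have "\<dots> \<le> a" unfolding a_def using alow of_rat_less_eq by blast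
    finally show ?thesis .
  qed
  have xsmall: "x < 1 / (2 * Y)"
  proof -
    have "2 * DD * Y < a^2 * Y^l" using xsmall_aux[OF aM Y4 DD8(2) assms(5)] .
    hence "2 * DD * Y < P" unfolding P_def YP .
    thus ?thesis unfolding x_def using P0 Y4 by (simp add: field_simps)
  qed
  have L2big: "\<bar>ln (Y / Z)\<bar> \<ge> 1 / (2 * Y)"
    unfolding Y_def Z_def using L2big[of "y1^2" y2] Y4 assms(8,9) unfolding Y_def by simp
  have indep: "mult_indep \<alpha>1 \<alpha>2" unfolding mult_indep_def
  proof (intro allI impI)
    fix m n :: int assume h: "\<alpha>1 powi m * \<alpha>2 powi n = 1"
    have vrel: "m * ordq q \<alpha>1 + n * ordq q \<alpha>2 = 0" if "prime q" for q
    proof -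
      have "ordq q (\<alpha>1 powi m * \<alpha>2 powi n) = 0" using h ordq_one[OF that] by simp
      thus ?thesis using that a1pos a2pos by (simp add: ordq_mult ordq_powi)
    qed
    have "real_of_rat (\<alpha>1 powi m * \<alpha>2 powi n) = 1" using h by simp
    hence "(4 * b / a^2) powi m * (Y / Z) powi n = 1"
      by (simp add: of_rat_mult of_rat_powi r1 r2)
    hence "ln ((4 * b / a^2) powi m * (Y / Z) powi n) = 0" by simp
    hence rrel: "real_of_int m * ln (4 * b / a^2) + real_of_int n * ln (Y / Z) = 0"
      using a0 b0 Y4 Z2 by (simp add: ln_mult ln_powi)
    show "m = 0 \<and> n = 0"
    proof (rule ccontr)
      assume nz: "\<not> (m = 0 \<and> n = 0)"
      have L2nz: "ln (Y / Z) \<noteq> 0" using L2big Y4 by auto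
      have m0: "m \<noteq> 0"
      proof
        assume "m = 0"
        hence "n \<noteq> 0" using nz by simp
        with rrel \<open>m = 0\<close> L2nz show False by simp
      qed
      have nb: "\<bar>n\<bar> \<le> 35 * \<bar>m\<bar>"
      proof (cases "n = 0")
        case False
        obtain q where q: "prime q" "ordq q \<alpha>2 \<noteq> 0" using exq by blast
        have one: "\<bar>ordq q \<alpha>2\<bar> \<ge> 1" using q(2) by (cases "ordq q \<alpha>2 \<ge> 0") auto
        have "\<bar>n\<bar> * 1 \<le> \<bar>n\<bar> * \<bar>ordq q \<alpha>2\<bar>" using one by (intro mult_left_mono) auto
        hence "\<bar>n\<bar> \<le> \<bar>n\<bar> * \<bar>ordq q \<alpha>2\<bar>" by simp
        also have "\<dots> = \<bar>m * ordq q \<alpha>1\<bar>" using vrel[OF q(1)]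
          by (metis abs_minus_cancel abs_mult add.inverse_unique add.commute)
        also have "\<dots> \<le> \<bar>m\<bar> * 35" using v1b[OF q(1)] by (simp add: abs_mult mult_left_mono)
        finally show ?thesis by simp
      qed simp
      have big: "\<bar>n + int l * m\<bar> \<ge> \<bar>m\<bar>"
      proof -
        have "\<bar>int l * m\<bar> = int l * \<bar>m\<bar>" by (simp add: abs_mult)
        moreover have "int l * \<bar>m\<bar> \<ge> 1001 * \<bar>m\<bar>" using assms(5) by (intro mult_right_mono) auto
        ultimately show ?thesis using nb by linarith
      qed
      have mL: "real_of_int m * \<Lambda> = - real_of_int (n + int l * m) * ln (Y / Z)"
        using rrel unfolding \<Lambda>_def by (simp add: algebra_simps)
      hence "\<bar>real_of_int m\<bar> * \<Lambda> = \<bar>real_of_int (n + int l * m)\<bar> * \<bar>ln (Y / Z)\<bar>"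
        using Lpos by (metis abs_minus_cancel abs_mult abs_of_pos mult_minus_left)
      also have "\<dots> \<ge> \<bar>real_of_int m\<bar> * \<bar>ln (Y / Z)\<bar>"
      proof -
        have bigR: "\<bar>real_of_int m\<bar> \<le> \<bar>real_of_int (n + int l * m)\<bar>"
          using big by (metis of_int_abs of_int_le_iff)
        show ?thesis using mult_right_mono[OF bigR abs_ge_zero] .
      qed
      finally have "\<bar>real_of_int m\<bar> * \<bar>ln (Y / Z)\<bar> \<le> \<bar>real_of_int m\<bar> * \<Lambda>" .
      hence "\<bar>ln (Y / Z)\<bar> \<le> \<Lambda>" using m0 by simp
      thus False using L2big xsmall Lless by linarith
    qed
  qed
  have main: "\<alpha>1 > 0 \<and> \<alpha>2 > 0 \<and> mult_indep \<alpha>1 \<alpha>2 \<and> 0 < \<Lambda> \<and> \<Lambda> < x"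
    using a1pos a2pos indep Lpos Lless by blast
  show ?thesis using main unfolding \<alpha>1_def \<alpha>2_def \<Lambda>_def x_def DD_def P_def
    using r1 r2 unfolding \<alpha>1_def \<alpha>2_def a_def by simp
qed

end
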